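(* Let $\rho$ be a density matrix on $\mathbb{C}^d$ and $H$ a Hermitian operator on $\mathbb{C}^d$, with $F_Q>0$. Then for all $n=1,2,\dots$, $$\frac{\left|B_n^{(\mathsf{Kry})}-F_Q\right|}{F_Q}\le\frac{\left|B_{2n-1}^{(\mathsf{Tay})}-F_Q\right|}{F_Q}.$$
   Context: Write $\rho=\sum_k p_k|k\rangle\langle k|$ (spectral decomposition). The quantum Fisher information is $F_Q=2\sum_{k,l:\,p_k+p_l>0}\frac{(p_k-p_l)^2}{p_k+p_l}|\langle k|H|l\rangle|^2$. Let $\mathcal{X}$ be the real space of Hermitian operators $X$ with $\langle k|X|l\rangle=0$ whenever $p_k=p_l=0$, with inner product $\langle X,Y\rangle_\rho=\mathrm{tr}[\rho(XY+YX)/2]$ and norm $\|X\|_\rho=\sqrt{\langle X,X\rangle_\rho}$. Let $\mathcal{R}_\rho(X)=\frac12(\rho X+X\rho)$ and let $L\in\mathcal{X}$ be the unique solution of $\mathcal{R}_\rho(L)=i[\rho,H]$ (the SLD; $F_Q=\|L\|_\rho^2$). Let $\mathcal{K}_n=\mathrm{span}\{\mathcal{R}_\rho^{k}(i[\rho,H]):k=0,\dots,n-1\}$, let $L_n$ be the $\langle\cdot,\cdot\rangle_\rho$-orthogonal projection of $L$ onto $\mathcal{K}_n$, and $B_n^{(\mathsf{Kry})}=\|L_n\|_\rho^2$ (the $n$-th Krylov bound). The $m$-th Taylor bound is $$B_m^{(\mathsf{Tay})}=2\,\mathrm{tr}\Big(\sum_{l=0}^{m}(\rho\otimes\mathbb{1}-\mathbb{1}\otimes\rho)^2(\mathbb{1}\otimes\mathbb{1}-\rho\otimes\mathbb{1}-\mathbb{1}\otimes\rho)^l\,S\,(H\otimes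 H)\Big),$$ where $\mathbb{1}$ is the identity on $\mathbb{C}^d$ and $S$ is the swap operator on $\mathbb{C}^d\otimes\mathbb{C}^d$. *)

theory Defs
  imports "HOL-Analysis.Analysis"
begin

type_synonym 'd cmat = "complex^'d^'d"

definition adj :: "'d::finite cmat \<Rightarrow> 'd cmat" where
  "adj A = (\<chi> i j. cnj (A $ j $ i))"

definition hermitian :: "'d::finite cmat \<Rightarrow> bool" where
  "hermitian A \<longleftrightarrow> adj A = A"

definition unitary :: "'d::finite cmat \<Rightarrow> bool" where
  "unitary U \<longleftrightarrow> adj U ** U = mat 1 \<and> U ** adj U = mat 1"

definition psd :: "'d::finite cmat \<Rightarrow> bool" where
  "psd A \<longleftrightarrow> hermitian A \<and>
     (\<forall>v::complex^'d. 0 \<le> Re (\<Sum>i\<in>UNIV. \<Sum>j\<in>UNIV. cnj (v $ i) * A $ i $ j * v $ j))"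

definition density_matrix :: "'d::finite cmat \<Rightarrow> bool" where
  "density_matrix \<rho> \<longleftrightarrow> psd \<rho> \<and> trace \<rho> = 1"

definition diagm :: "('d::finite \<Rightarrow> real) \<Rightarrow> 'd cmat" where
  "diagm p = (\<chi> i j. if i = j then complex_of_real (p i) else 0)"

text \<open>Spectral decomposition: rho = sum_k p_k |k><k| with |k> the k-th column of the unitary U.\<close>
definition spectral_decomp :: "'d::finite cmat \<Rightarrow> 'd cmat \<Rightarrow> ('d \<Rightarrow> real) \<Rightarrow> bool" where
  "spectral_decomp \<rho> U p \<longleftrightarrow> unitary U \<and> \<rho> = U ** diagm p ** adj U"

text \<open>Matrix element <k|X|l> in the eigenbasis given by the columns of U.\<close>
definition melem :: "'d::finite cmat \<Rightarrow> 'd cmat \<Rightarrow> 'd \<Rightarrow> 'd \<Rightarrow> complex" where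
  "melem U X k l = (adj U ** X ** U) $ k $ l"

definition QFI :: "'d::finite cmat \<Rightarrow> ('d \<Rightarrow> real) \<Rightarrow> 'd cmat \<Rightarrow> real" where
  "QFI U p H = 2 * (\<Sum>(k,l)\<in>{(k,l). p k + p l > 0}.
       (p k - p l)^2 / (p k + p l) * (cmod (melem U H k l))^2)"

definition commutator :: "'d::finite cmat \<Rightarrow> 'd cmat \<Rightarrow> 'd cmat" where
  "commutator A B = A ** B - B ** A"

definition Xspace :: "'d::finite cmat \<Rightarrow> ('d \<Rightarrow> real) \<Rightarrow> 'd cmat set" where
  "Xspace U p = {X. hermitian X \<and> (\<forall>k l. p k = 0 \<and> p l = 0 \<longrightarrow> melem U X k l = 0)}"

text \<open>Inner product <X,Y>_rho = tr[rho (XY+YX)/2] (real-valued on Hermitian operators).\<close>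
definition rho_inner :: "'d::finite cmat \<Rightarrow> 'd cmat \<Rightarrow> 'd cmat \<Rightarrow> real" where
  "rho_inner \<rho> X Y = Re (trace (\<rho> ** ((1/2::real) *\<^sub>R (X ** Y + Y ** X))))"

definition Rop :: "'d::finite cmat \<Rightarrow> 'd cmat \<Rightarrow> 'd cmat" where
  "Rop \<rho> X = (1/2::real) *\<^sub>R (\<rho> ** X + X ** \<rho>)"

definition icomm :: "'d::finite cmat \<Rightarrow> 'd cmat \<Rightarrow> 'd cmat" where
  "icomm \<rho> H = (\<chi> i j. \<i> * commutator \<rho> H $ i $ j)"

definition SLD :: "'d::finite cmat \<Rightarrow> 'd cmat \<Rightarrow> ('d \<Rightarrow> real) \<Rightarrow> 'd cmat \<Rightarrow> 'd cmat" where
  "SLD \<rho> U p H = (THE L. L \<in> Xspace U p \<and> Rop \<rho> L = icomm \<rho> H)"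

definition Krylov :: "'d::finite cmat \<Rightarrow> 'd cmat \<Rightarrow> nat \<Rightarrow> 'd cmat set" where
  "Krylov \<rho> H n = {Y. \<exists>c::nat \<Rightarrow> real. Y = (\<Sum>k<n. c k *\<^sub>R ((Rop \<rho> ^^ k) (icomm \<rho> H)))}"

definition proj :: "'d::finite cmat \<Rightarrow> 'd cmat set \<Rightarrow> 'd cmat \<Rightarrow> 'd cmat" where
  "proj \<rho> K A = (THE Y. Y \<in> K \<and> (\<forall>Z\<in>K. rho_inner \<rho> (A - Y) Z = 0))"

definition krylov_bound :: "'d::finite cmat \<Rightarrow> 'd cmat \<Rightarrow> ('d \<Rightarrow> real) \<Rightarrow> 'd cmat \<Rightarrow> nat \<Rightarrow> real" where
  "krylov_bound \<rho> U p H n =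
     (let Ln = proj \<rho> (Krylov \<rho> H n) (SLD \<rho> U p H) in rho_inner \<rho> Ln Ln)"

text \<open>Operators on C^d (x) C^d as matrices indexed by pairs.\<close>
definition tensor :: "'d::finite cmat \<Rightarrow> 'd cmat \<Rightarrow> complex^('d\<times>'d)^('d\<times>'d)" where
  "tensor A B = (\<chi> r c. A $ fst r $ fst c * B $ snd r $ snd c)"

definition swap_op :: "complex^('d::finite\<times>'d)^('d\<times>'d)" where
  "swap_op = (\<chi> r c. if fst r = snd c \<and> snd r = fst c then 1 else 0)"

definition mpow :: "'a::semiring_1^'n::finite^'n \<Rightarrow> nat \<Rightarrow> 'a^'n^'n" where
  "mpow M l = (((**) M) ^^ l) (mat 1)"

definition taylor_bound :: "'d::finite cmat \<Rightarrow> 'd cmat \<Rightarrow> nat \<Rightarrow> complex" where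
  "taylor_bound \<rho> H m =
    2 * trace (\<Sum>l\<in>{0..m}.
        mpow (tensor \<rho> (mat 1) - tensor (mat 1) \<rho>) 2
        ** mpow (tensor (mat 1) (mat 1) - tensor \<rho> (mat 1) - tensor (mat 1) \<rho>) l
        ** swap_op ** tensor H H)"

end

theory Submission
  imports Defs
begin


lemma mm_entry: "((A::'a::semiring_1^'n::finite^'m) ** B) $ i $ j = (\<Sum>k\<in>UNIV. A$i$k * B$k$j)"
  by (simp add: matrix_matrix_mult_def)

lemma mm_scaleR_left: "((r::real) *\<^sub>R (A::complex^'n::finite^'m)) ** B = r *\<^sub>R (A ** B)"
  by (simp add: vec_eq_iff matrix_matrix_mult_def scaleR_sum_right)
lemma mm_scaleR_right: "(A::complex^'n::finite^'m) ** ((r::real) *\<^sub>R B) = r *\<^sub>R (A ** B)"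
  by (simp add: vec_eq_iff matrix_matrix_mult_def scaleR_sum_right)
lemma mm_add_right: "(A::'a::semiring_1^'n::finite^'m) ** (B + C) = A ** B + A ** C"
  by (simp add: vec_eq_iff matrix_matrix_mult_def sum.distrib distrib_left)
lemma mm_add_left: "((A::'a::semiring_1^'n::finite^'m) + B) ** C = A ** C + B ** C"
  by (simp add: vec_eq_iff matrix_matrix_mult_def sum.distrib distrib_right)
lemma mm_sub_right: "(A::'a::ring_1^'n::finite^'m) ** (B - C) = A ** B - A ** C"
  by (simp add: vec_eq_iff matrix_matrix_mult_def sum_subtractf algebra_simps)
lemma mm_sub_left: "((A::'a::ring_1^'n::finite^'m) - B) ** C = A ** C - B ** C"
  by (simp add: vec_eq_iff matrix_matrix_mult_def sum_subtractf algebra_simps)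
lemma mm_sum_right: "(A::'a::semiring_1^'n::finite^'m) ** (\<Sum>i\<in>S. f i) = (\<Sum>i\<in>S. A ** f i)"
  by (induction S rule: infinite_finite_induct) (auto simp: mm_add_right)
lemma mm_sum_left: "(\<Sum>i\<in>S. f i) ** (A::'a::semiring_1^'n::finite^'m) = (\<Sum>i\<in>S. f i ** A)"
  by (induction S rule: infinite_finite_induct) (auto simp: mm_add_left)

lemma adj_entry: "adj A $ i $ j = cnj (A $ j $ i)"
  by (simp add: adj_def)
lemma adj_mm: "adj ((A::'d::finite cmat) ** B) = adj B ** adj A"
  by (simp add: vec_eq_iff adj_def matrix_matrix_mult_def mult.commute)
lemma adj_adj: "adj (adj (A::'d::finite cmat)) = A"
  by (simp add: vec_eq_iff adj_def)


lemma melem_cmult: "melem U (\<chi> i j. c * (A::'d::finite cmat) $ i $ j) k l = c * melem U A k l"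
  by (simp add: melem_def matrix_matrix_mult_def sum_distrib_left sum_distrib_right mult.assoc mult.left_commute)

locale eig =
  fixes \<rho> U H :: "complex^'d::finite^'d" and p :: "'d \<Rightarrow> real"
  assumes unit: "unitary U" and rho_eq: "\<rho> = U ** diagm p ** adj U"
    and pnn: "\<And>k. p k \<ge> 0"
    and hermH: "hermitian H"
begin

lemma UU1: "adj U ** U = mat 1" and UU2: "U ** adj U = mat 1"
  using unit by (auto simp: unitary_def)

lemma UU1': "A ** adj U ** U = A"
  by (metis UU1 matrix_mul_assoc matrix_mul_rid)
lemma UU2': "A ** U ** adj U = A"
  by (metis UU2 matrix_mul_assoc matrix_mul_rid)

definition Mx where "Mx X = adj U ** X ** U"

lemma melem_Mx: "melem U X k l = Mx X $ k $ l" by (simp add: melem_def Mx_def)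

lemma Mx_inv: "U ** Mx X ** adj U = X"
proof -
  have "U ** Mx X ** adj U = U ** adj U ** X ** U ** adj U"
    by (simp only: Mx_def matrix_mul_assoc)
  then show ?thesis by (simp only: UU2' UU2 matrix_mul_lid)
qed

lemma melem_ext: "(\<And>k l. melem U X k l = melem U Y k l) \<Longrightarrow> X = Y"
proof -
  assume a: "\<And>k l. melem U X k l = melem U Y k l"
  have "Mx X = Mx Y" using a by (simp add: vec_eq_iff melem_Mx)
  then have "U ** Mx X ** adj U = U ** Mx Y ** adj U" by simp
  then show "X = Y" by (simp only: Mx_inv)
qed

lemma melem_zero: "melem U 0 k l = 0" by (simp add: melem_def)
lemma melem_add: "melem U (X + Y) k l = melem U X k l + melem U Y k l"
  by (simp add: melem_def mm_add_left mm_add_right)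
lemma melem_sub: "melem U (X - Y) k l = melem U X k l - melem U Y k l"
  by (simp add: melem_def mm_sub_left mm_sub_right)
lemma melem_scaleR: "melem U (r *\<^sub>R X) k l = complex_of_real r * melem U X k l"
  unfolding melem_def mm_scaleR_left mm_scaleR_right vector_scaleR_component by (simp add: scaleR_conv_of_real)
lemma melem_sum: "melem U (\<Sum>i\<in>S. f i) k l = (\<Sum>i\<in>S. melem U (f i) k l)"
  by (induction S rule: infinite_finite_induct) (auto simp: melem_zero melem_add)

lemma Mx_mult: "Mx (X ** Y) = Mx X ** Mx Y"
proof -
  have "Mx X ** Mx Y = adj U ** X ** U ** adj U ** Y ** U"
    by (simp only: Mx_def matrix_mul_assoc)
  then show ?thesis by (simp only: UU2' Mx_def matrix_mul_assoc)
qed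

lemma melem_mult: "melem U (X ** Y) k l = (\<Sum>j\<in>UNIV. melem U X k j * melem U Y j l)"
  by (simp add: melem_Mx Mx_mult mm_entry)

lemma melem_rho: "melem U \<rho> k l = (if k = l then complex_of_real (p k) else 0)"
proof -
  have "Mx \<rho> = adj U ** U ** diagm p ** adj U ** U"
    by (simp only: Mx_def rho_eq matrix_mul_assoc)
  then have "Mx \<rho> = diagm p" by (simp only: UU1' UU1 matrix_mul_lid)
  then show ?thesis by (simp add: melem_Mx diagm_def)
qed

lemma melem_rho_left: "melem U (\<rho> ** X) k l = p k * melem U X k l"
  by (simp add: melem_mult melem_rho if_distrib if_distribR sum.delta cong: if_cong)
lemma melem_rho_right: "melem U (X ** \<rho>) k l = p l * melem U X k l"
  by (simp add: melem_mult melem_rho if_distrib if_distribR sum.delta' mult.commute cong: if_cong)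

lemma melem_adj: "melem U (adj X) k l = cnj (melem U X l k)"
proof -
  have "Mx (adj X) = adj (Mx X)" by (simp only: Mx_def adj_mm adj_adj matrix_mul_assoc)
  then show ?thesis by (simp add: melem_Mx adj_entry)
qed

lemma herm_iff: "hermitian X \<longleftrightarrow> (\<forall>k l. melem U X l k = cnj (melem U X k l))"
proof
  assume "hermitian X"
  then have "adj X = X" by (simp add: hermitian_def)
  show "\<forall>k l. melem U X l k = cnj (melem U X k l)"
  proof (intro allI)
    fix k l
    have "melem U X l k = melem U (adj X) l k" using \<open>adj X = X\<close> by simp
    also have "\<dots> = cnj (melem U X k l)" by (rule melem_adj)
    finally show "melem U X l k = cnj (melem U X k l)" .
  qed
next
  assume "\<forall>k l. melem U X l k = cnj (melem U X k l)"
  then have "adj X = X"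
    by (intro melem_ext) (metis melem_adj)
  then show "hermitian X" by (simp add: hermitian_def)
qed

lemma trace_melem: "trace X = (\<Sum>k\<in>UNIV. melem U X k k)"
proof -
  have "trace (Mx X) = trace (adj U ** (X ** U))"
    unfolding Mx_def by (simp only: matrix_mul_assoc)
  also have "\<dots> = trace ((X ** U) ** adj U)" by (rule trace_mul_sym)
  also have "\<dots> = trace X" by (simp only: UU2 flip: matrix_mul_assoc) simp
  finally show ?thesis by (simp add: melem_Mx trace_def)
qed

lemma melem_Rop: "melem U (Rop \<rho> X) k l = complex_of_real ((p k + p l) / 2) * melem U X k l"
  by (simp add: Rop_def melem_scaleR melem_add melem_rho_left melem_rho_right algebra_simps)

lemma melem_icomm: "melem U (icomm \<rho> H) k l = \<i> * complex_of_real (p k - p l) * melem U H k l"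
  unfolding icomm_def melem_cmult by (simp add: commutator_def melem_sub melem_rho_left melem_rho_right algebra_simps)

end


definition kr :: "(nat \<Rightarrow> 'a::real_vector) \<Rightarrow> nat \<Rightarrow> 'a set" where
  "kr v m = {Y. \<exists>c. Y = (\<Sum>k<m. c k *\<^sub>R v k)}"

lemma kr_zero: "0 \<in> kr v m"
  unfolding kr_def by (rule CollectI, rule exI[of _ "\<lambda>_. 0"]) simp

lemma kr_add: "X \<in> kr v m \<Longrightarrow> Y \<in> kr v m \<Longrightarrow> X + Y \<in> kr v m"
  unfolding kr_def
proof clarify
  fix c d
  show "\<exists>e. (\<Sum>k<m. c k *\<^sub>R v k) + (\<Sum>k<m. d k *\<^sub>R v k) = (\<Sum>k<m. e k *\<^sub>R v k)"
    by (rule exI[of _ "\<lambda>k. c k + d k"]) (simp add: sum.distrib scaleR_add_left)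
qed

lemma kr_scale: "X \<in> kr v m \<Longrightarrow> r *\<^sub>R X \<in> kr v m"
  unfolding kr_def
proof clarify
  fix c
  show "\<exists>e. r *\<^sub>R (\<Sum>k<m. c k *\<^sub>R v k) = (\<Sum>k<m. e k *\<^sub>R v k)"
    by (rule exI[of _ "\<lambda>k. r * c k"]) (simp add: scaleR_sum_right)
qed

lemma kr_sub: "X \<in> kr v m \<Longrightarrow> Y \<in> kr v m \<Longrightarrow> X - Y \<in> kr v m"
  using kr_add[of X v m "(-1) *\<^sub>R Y"] kr_scale[of Y v m "-1"] by simp

lemma kr_sum: "(\<And>i. i \<in> S \<Longrightarrow> f i \<in> kr v m) \<Longrightarrow> (\<Sum>i\<in>S. f i) \<in> kr v m"
  by (induction S rule: infinite_finite_induct) (auto simp: kr_zero kr_add)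

lemma kr_mono: "m \<le> n \<Longrightarrow> kr v m \<subseteq> kr v n"
  unfolding kr_def
proof clarify
  fix c assume mn: "m \<le> n"
  define g where "g = (\<lambda>k. (if k < m then c k else 0) *\<^sub>R v k)"
  have "sum g {..<n} = sum g {..<m}"
    by (rule sum.mono_neutral_right) (use mn in \<open>auto simp: g_def\<close>)
  also have "\<dots> = (\<Sum>k<m. c k *\<^sub>R v k)"
    by (rule sum.cong) (auto simp: g_def)
  finally show "\<exists>e. (\<Sum>k<m. c k *\<^sub>R v k) = (\<Sum>k<n. e k *\<^sub>R v k)"
    unfolding g_def by metis
qed

lemma kr_gen: "k < m \<Longrightarrow> v k \<in> kr v m"
  unfolding kr_def
  by (rule CollectI, rule exI[of _ "\<lambda>j. if j = k then 1 else 0"])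
     (simp add: if_distrib if_distribR sum.delta cong: if_cong)

locale bil =
  fixes ip :: "'a::real_vector \<Rightarrow> 'a \<Rightarrow> real"
  assumes ip_add: "\<And>x y z. ip (x + y) z = ip x z + ip y z"
    and ip_scale: "\<And>r x z. ip (r *\<^sub>R x) z = r * ip x z"
    and ip_sym: "\<And>x y. ip x y = ip y x"
begin

lemma ip_add2: "ip z (x + y) = ip z x + ip z y"
  using ip_add ip_sym by metis
lemma ip_scale2: "ip z (r *\<^sub>R x) = r * ip z x"
  using ip_scale ip_sym by metis
lemma ip_zero: "ip 0 z = 0"
  using ip_scale[of 0 z z] by simp
lemma ip_zero2: "ip z 0 = 0"
  using ip_zero ip_sym by metis
lemma ip_neg: "ip (- x) z = - ip x z"
  using ip_scale[of "-1" x z] by simp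
lemma ip_sub: "ip (x - y) z = ip x z - ip y z"
  using ip_add[of x "- y" z] ip_neg by simp
lemma ip_sub2: "ip z (x - y) = ip z x - ip z y"
  using ip_sub ip_sym by metis
lemma ip_sum2: "ip z (\<Sum>i\<in>S. f i) = (\<Sum>i\<in>S. ip z (f i))"
  by (induction S rule: infinite_finite_induct) (auto simp: ip_zero2 ip_add2)

lemma orth_kr: "(\<And>k. k < m \<Longrightarrow> ip X (v k) = 0) \<Longrightarrow> Z \<in> kr v m \<Longrightarrow> ip X Z = 0"
  unfolding kr_def by (auto simp: ip_sum2 ip_scale2)

lemma proj_ex:
  assumes def: "\<And>Y. Y \<in> kr v m \<Longrightarrow> ip Y Y = 0 \<Longrightarrow> Y = 0"
  shows "\<exists>Y\<in>kr v m. \<forall>k<m. ip (A - Y) (v k) = 0"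
  using def
proof (induction m arbitrary: A)
  case 0
  then show ?case using kr_zero by blast
next
  case (Suc m)
  have def': "\<And>Y. Y \<in> kr v m \<Longrightarrow> ip Y Y = 0 \<Longrightarrow> Y = 0"
    using Suc.prems kr_mono[of m "Suc m" v] by auto
  obtain Ya where Ya: "Ya \<in> kr v m" "\<And>k. k < m \<Longrightarrow> ip (A - Ya) (v k) = 0"
    using Suc.IH[OF def'] by blast
  obtain Yv where Yv: "Yv \<in> kr v m" "\<And>k. k < m \<Longrightarrow> ip (v m - Yv) (v k) = 0"
    using Suc.IH[OF def'] by blast
  define w where "w = v m - Yv"
  have sub: "kr v m \<subseteq> kr v (Suc m)" by (rule kr_mono) simp
  have wK: "w \<in> kr v (Suc m)"
    unfolding w_def using kr_sub[OF kr_gen[of m "Suc m" v]] Yv(1) sub by auto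
  have wo: "\<And>k. k < m \<Longrightarrow> ip w (v k) = 0" using Yv(2) w_def by simp
  show ?case
  proof (cases "ip w w = 0")
    case True
    then have "w = 0" using Suc.prems wK by blast
    then have vm: "v m = Yv" using w_def by simp
    have "ip (A - Ya) Yv = 0" using orth_kr[of m "A - Ya" v Yv] Ya(2) Yv(1) by blast
    then have "\<forall>k<Suc m. ip (A - Ya) (v k) = 0"
      using Ya(2) vm less_Suc_eq by auto
    then show ?thesis using Ya(1) sub by blast
  next
    case False
    define t where "t = ip (A - Ya) w / ip w w"
    define Y where "Y = Ya + t *\<^sub>R w"
    have YK: "Y \<in> kr v (Suc m)" unfolding Y_def
      using kr_add[OF _ kr_scale[OF wK]] Ya(1) sub by blast
    have o1: "ip (A - Y) (v k) = 0" if "k < m" for k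
    proof -
      have "A - Y = (A - Ya) - t *\<^sub>R w" by (simp add: Y_def)
      then have "ip (A - Y) (v k) = ip (A - Ya) (v k) - t * ip w (v k)"
        by (simp only: ip_sub ip_scale)
      then show ?thesis using Ya(2)[OF that] wo[OF that] by simp
    qed
    have o2: "ip (A - Y) w = 0"
    proof -
      have "A - Y = (A - Ya) - t *\<^sub>R w" by (simp add: Y_def)
      then have "ip (A - Y) w = ip (A - Ya) w - t * ip w w"
        by (simp only: ip_sub ip_scale)
      then show ?thesis using False by (simp add: t_def)
    qed
    have o3: "ip (A - Y) Yv = 0" using orth_kr[of m "A - Y" v Yv] o1 Yv(1) by blast
    have vm: "v m = w + Yv" by (simp add: w_def)
    have "ip (A - Y) (v m) = ip (A - Y) w + ip (A - Y) Yv"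
      by (simp only: vm ip_add2)
    then have "ip (A - Y) (v m) = 0" using o2 o3 by simp
    then have "\<forall>k<Suc m. ip (A - Y) (v k) = 0" using o1 less_Suc_eq by auto
    then show ?thesis using YK by blast
  qed
qed

lemma proj_unique:
  assumes def: "\<And>Y. Y \<in> kr v m \<Longrightarrow> ip Y Y = 0 \<Longrightarrow> Y = 0"
    and "Y1 \<in> kr v m" "\<forall>Z\<in>kr v m. ip (A - Y1) Z = 0"
    and "Y2 \<in> kr v m" "\<forall>Z\<in>kr v m. ip (A - Y2) Z = 0"
  shows "Y1 = Y2"
proof -
  define D where "D = Y2 - Y1"
  have d: "D \<in> kr v m" using assms kr_sub D_def by blast
  have e: "D = (A - Y1) - (A - Y2)" by (simp add: D_def)
  have "ip D D = ip ((A - Y1) - (A - Y2)) D" using e by metis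
  also have "\<dots> = ip (A - Y1) D - ip (A - Y2) D" by (rule ip_sub)
  also have "\<dots> = 0" using assms d by simp
  finally have "D = 0" using def d by blast
  then show ?thesis by (simp add: D_def)
qed

lemma proj_char:
  assumes def: "\<And>Y. Y \<in> kr v m \<Longrightarrow> ip Y Y = 0 \<Longrightarrow> Y = 0"
  shows "(THE Y. Y \<in> kr v m \<and> (\<forall>Z\<in>kr v m. ip (A - Y) Z = 0)) \<in> kr v m \<and>
     (\<forall>Z\<in>kr v m. ip (A - (THE Y. Y \<in> kr v m \<and> (\<forall>Z\<in>kr v m. ip (A - Y) Z = 0))) Z = 0)"
proof -
  obtain Y where Y: "Y \<in> kr v m" "\<forall>k<m. ip (A - Y) (v k) = 0" using proj_ex[OF def] by blast
  have Y2: "\<forall>Z\<in>kr v m. ip (A - Y) Z = 0" using orth_kr Y(2) by blast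
  have "(THE Y. Y \<in> kr v m \<and> (\<forall>Z\<in>kr v m. ip (A - Y) Z = 0)) = Y"
  proof (rule the_equality)
    show "Y \<in> kr v m \<and> (\<forall>Z\<in>kr v m. ip (A - Y) Z = 0)" using Y Y2 by blast
  next
    fix Y' assume "Y' \<in> kr v m \<and> (\<forall>Z\<in>kr v m. ip (A - Y') Z = 0)"
    then show "Y' = Y" using Y(1) Y2 by (intro proj_unique[OF def]) blast+
  qed
  then show ?thesis using Y Y2 by simp
qed

lemma pyth:
  assumes "ip (A - Y) Y = 0" "ip (A - Y) Y0 = 0"
  shows "ip A A = ip Y Y + ip (A - Y) (A - Y)"
    and "ip (A - Y0) (A - Y0) = ip (A - Y) (A - Y) + ip (Y - Y0) (Y - Y0)"
proof -
  define E where "E = A - Y"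
  define F where "F = Y - Y0"
  have a1: "A = Y + E" by (simp add: E_def)
  have a2: "A - Y0 = E + F" by (simp add: E_def F_def)
  have eY: "ip E Y = 0" "ip Y E = 0" using assms(1) ip_sym E_def by metis+
  have eF: "ip E F = 0" "ip F E = 0"
    using assms ip_sym ip_sub2[of E Y Y0] E_def F_def by simp_all
  have "ip A A = ip (Y + E) (Y + E)" using a1 by metis
  also have "\<dots> = ip Y Y + ip Y E + (ip E Y + ip E E)" by (simp only: ip_add ip_add2)
  finally show "ip A A = ip Y Y + ip (A - Y) (A - Y)" using eY E_def by simp
  have "ip (A - Y0) (A - Y0) = ip (E + F) (E + F)" using a2 by metis
  also have "\<dots> = ip E E + ip E F + (ip F E + ip F F)" by (simp only: ip_add ip_add2)
  finally show "ip (A - Y0) (A - Y0) = ip (A - Y) (A - Y) + ip (Y - Y0) (Y - Y0)"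
    using eF E_def F_def by simp
qed

end


context eig begin

lemma Re_ofr_mult: "Re (complex_of_real a * z) = a * Re z" by simp

lemma inner_formula: "rho_inner \<rho> X Y =
   (\<Sum>k\<in>UNIV. \<Sum>j\<in>UNIV. (p k + p j) / 2 * Re (melem U X k j * melem U Y j k))"
proof -
  have 1: "rho_inner \<rho> X Y = (\<Sum>k\<in>UNIV. \<Sum>j\<in>UNIV. p k / 2 * Re (melem U X k j * melem U Y j k))
      + (\<Sum>k\<in>UNIV. \<Sum>j\<in>UNIV. p k / 2 * Re (melem U Y k j * melem U X j k))"
  proof -
    have a: "rho_inner \<rho> X Y = Re (\<Sum>k\<in>UNIV. complex_of_real (p k) * melem U ((1/2::real) *\<^sub>R (X ** Y + Y ** X)) k k)"
      by (simp only: rho_inner_def trace_melem melem_rho_left)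
    have b: "\<And>k. melem U ((1/2::real) *\<^sub>R (X ** Y + Y ** X)) k k = complex_of_real (1/2) *
       ((\<Sum>j\<in>UNIV. melem U X k j * melem U Y j k) + (\<Sum>j\<in>UNIV. melem U Y k j * melem U X j k))"
      by (simp only: melem_scaleR melem_add melem_mult)
    show ?thesis unfolding a b
      by (simp add: sum.distrib sum_distrib_left distrib_left Re_sum)
  qed
  have 2: "(\<Sum>k\<in>UNIV. \<Sum>j\<in>UNIV. p k / 2 * Re (melem U Y k j * melem U X j k))
     = (\<Sum>k\<in>UNIV. \<Sum>j\<in>UNIV. p j / 2 * Re (melem U X k j * melem U Y j k))"
    by (subst sum.swap) (simp add: mult.commute)
  show ?thesis unfolding 1 2 by (simp add: sum.distrib[symmetric] add_divide_distrib distrib_right)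
qed


lemma inner_herm:
  assumes "hermitian X"
  shows "rho_inner \<rho> X X = (\<Sum>k\<in>UNIV. \<Sum>j\<in>UNIV. (p k + p j) / 2 * (cmod (melem U X k j))\<^sup>2)"
proof -
  have h: "\<And>k j. melem U X j k = cnj (melem U X k j)" using assms herm_iff by blast
  have r: "\<And>k j. Re (melem U X k j * melem U X j k) = (cmod (melem U X k j))\<^sup>2"
  proof -
    fix k j
    have "melem U X k j * melem U X j k = melem U X k j * cnj (melem U X k j)" by (simp only: h[of j k])
    also have "\<dots> = complex_of_real ((cmod (melem U X k j))\<^sup>2)" by (rule complex_norm_square[symmetric])
    finally show "Re (melem U X k j * melem U X j k) = (cmod (melem U X k j))\<^sup>2" by simp
  qed
  show ?thesis by (simp only: inner_formula r)
qed

lemma inner_nonneg: "hermitian X \<Longrightarrow> 0 \<le> rho_inner \<rho> X X"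
  by (simp add: inner_herm sum_nonneg pnn add_nonneg_nonneg)

lemma Xspace_iff: "X \<in> Xspace U p \<longleftrightarrow> (\<forall>k l. melem U X l k = cnj (melem U X k l)) \<and>
   (\<forall>k l. p k = 0 \<and> p l = 0 \<longrightarrow> melem U X k l = 0)"
  by (simp add: Xspace_def herm_iff)

lemma Xspace_I: "(\<And>k l. melem U X l k = cnj (melem U X k l)) \<Longrightarrow>
  (\<And>k l. p k = 0 \<Longrightarrow> p l = 0 \<Longrightarrow> melem U X k l = 0) \<Longrightarrow> X \<in> Xspace U p"
  unfolding Xspace_iff by blast
lemma Xspace_D1: "X \<in> Xspace U p \<Longrightarrow> melem U X l k = cnj (melem U X k l)"
  unfolding Xspace_iff by blast
lemma Xspace_D2: "X \<in> Xspace U p \<Longrightarrow> p k = 0 \<Longrightarrow> p l = 0 \<Longrightarrow> melem U X k l = 0"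
  unfolding Xspace_iff by blast

lemma Xspace_herm: "X \<in> Xspace U p \<Longrightarrow> hermitian X"
  by (simp add: Xspace_def)

lemma inner_def0:
  assumes X: "X \<in> Xspace U p" and z: "rho_inner \<rho> X X = 0"
  shows "X = 0"
proof (rule melem_ext)
  fix k l
  define f where "f = (\<lambda>k j. (p k + p j) / 2 * (cmod (melem U X k j))\<^sup>2)"
  have nn: "\<And>k j. 0 \<le> f k j"
    unfolding f_def using pnn by (simp add: add_nonneg_nonneg)
  have nn2: "\<And>k. 0 \<le> (\<Sum>j\<in>UNIV. f k j)" by (rule sum_nonneg) (rule nn)
  have "(\<Sum>k\<in>UNIV. \<Sum>j\<in>UNIV. f k j) = 0"
    using z inner_herm[OF Xspace_herm[OF X]] by (simp add: f_def)
  then have "\<forall>k\<in>UNIV. (\<Sum>j\<in>UNIV. f k j) = 0"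
    using sum_nonneg_eq_0_iff[of UNIV "\<lambda>k. \<Sum>j\<in>UNIV. f k j"] nn2 by simp
  then have "(\<Sum>j\<in>UNIV. f k j) = 0" by blast
  then have "\<forall>j\<in>UNIV. f k j = 0"
    using sum_nonneg_eq_0_iff[of UNIV "\<lambda>j. f k j"] nn by simp
  then have t: "(p k + p l) / 2 * (cmod (melem U X k l))\<^sup>2 = 0" by (simp add: f_def)
  show "melem U X k l = melem U 0 k l"
  proof (cases "p k + p l = 0")
    case True
    then have "p k = 0" "p l = 0" using pnn[of k] pnn[of l] by linarith+
    then show ?thesis using Xspace_D2[OF X] by (simp add: melem_zero)
  next
    case False
    then show ?thesis using t by (simp add: melem_zero)
  qed
qed

lemma ip_sym': "rho_inner \<rho> X Y = rho_inner \<rho> Y X"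
  by (simp add: rho_inner_def add.commute)

lemma ip_add': "rho_inner \<rho> (X + Y) Z = rho_inner \<rho> X Z + rho_inner \<rho> Y Z"
  by (simp add: inner_formula melem_add ring_distribs sum.distrib)

lemma ip_scale': "rho_inner \<rho> (r *\<^sub>R X) Z = r * rho_inner \<rho> X Z"
  unfolding inner_formula sum_distrib_left
  by (intro sum.cong refl) (simp add: melem_scaleR algebra_simps)

end

sublocale eig \<subseteq> bil "rho_inner \<rho>"
proof unfold_locales
  fix x y z :: "complex^'d^'d" and r :: real
  show "rho_inner \<rho> (x + y) z = rho_inner \<rho> x z + rho_inner \<rho> y z" by (rule ip_add')
  show "rho_inner \<rho> (r *\<^sub>R x) z = r * rho_inner \<rho> x z" by (rule ip_scale')
  show "rho_inner \<rho> x y = rho_inner \<rho> y x" by (rule ip_sym')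
qed

context eig begin

lemma Xspace_add: assumes X: "X \<in> Xspace U p" and Y: "Y \<in> Xspace U p" shows "X + Y \<in> Xspace U p"
proof (rule Xspace_I)
  fix k l
  show "melem U (X + Y) l k = cnj (melem U (X + Y) k l)"
    using Xspace_D1[OF X, of l k] Xspace_D1[OF Y, of l k] by (simp add: melem_add)
  show "p k = 0 \<Longrightarrow> p l = 0 \<Longrightarrow> melem U (X + Y) k l = 0"
    using Xspace_D2[OF X, of k l] Xspace_D2[OF Y, of k l] by (simp add: melem_add)
qed
lemma Xspace_scale: assumes X: "X \<in> Xspace U p" shows "r *\<^sub>R X \<in> Xspace U p"
proof (rule Xspace_I)
  fix k l
  show "melem U (r *\<^sub>R X) l k = cnj (melem U (r *\<^sub>R X) k l)"
    using Xspace_D1[OF X, of l k] by (simp add: melem_scaleR)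
  show "p k = 0 \<Longrightarrow> p l = 0 \<Longrightarrow> melem U (r *\<^sub>R X) k l = 0"
    using Xspace_D2[OF X, of k l] by (simp add: melem_scaleR)
qed
lemma Xspace_zero: "0 \<in> Xspace U p"
  by (rule Xspace_I) (simp_all add: melem_zero)
lemma Xspace_sum: "(\<And>i. i \<in> S \<Longrightarrow> f i \<in> Xspace U p) \<Longrightarrow> (\<Sum>i\<in>S. f i) \<in> Xspace U p"
  by (induction S rule: infinite_finite_induct) (auto simp: Xspace_zero Xspace_add)
lemma Xspace_Rop: assumes X: "X \<in> Xspace U p" shows "Rop \<rho> X \<in> Xspace U p"
proof (rule Xspace_I)
  fix k l
  show "melem U (Rop \<rho> X) l k = cnj (melem U (Rop \<rho> X) k l)"
    using Xspace_D1[OF X, of l k] by (simp add: melem_Rop add.commute)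
  show "p k = 0 \<Longrightarrow> p l = 0 \<Longrightarrow> melem U (Rop \<rho> X) k l = 0"
    using Xspace_D2[OF X, of k l] by (simp add: melem_Rop)
qed

lemma H_herm: "melem U H l k = cnj (melem U H k l)"
  using hermH herm_iff by blast

lemma Xspace_icomm: "icomm \<rho> H \<in> Xspace U p"
proof (rule Xspace_I)
  fix k l
  show "melem U (icomm \<rho> H) l k = cnj (melem U (icomm \<rho> H) k l)"
    unfolding melem_icomm by (simp only: H_herm[of l k]) (simp add: algebra_simps)
  show "p k = 0 \<Longrightarrow> p l = 0 \<Longrightarrow> melem U (icomm \<rho> H) k l = 0"
    unfolding melem_icomm by simp
qed

lemma Krylov_kr: "Krylov \<rho> H n = kr (\<lambda>k. (Rop \<rho> ^^ k) (icomm \<rho> H)) n"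
  by (simp add: Krylov_def kr_def)

lemma gen_Xspace: "(Rop \<rho> ^^ k) (icomm \<rho> H) \<in> Xspace U p"
  by (induction k) (simp_all add: Xspace_icomm Xspace_Rop)

lemma kr_Xspace: "Y \<in> kr (\<lambda>k. (Rop \<rho> ^^ k) (icomm \<rho> H)) n \<Longrightarrow> Y \<in> Xspace U p"
  unfolding kr_def by (auto intro!: Xspace_sum Xspace_scale gen_Xspace)

end


context eig begin

lemma melem_conj: "melem U (U ** A ** adj U) k l = A $ k $ l"
proof -
  have "Mx (U ** A ** adj U) = adj U ** U ** A ** adj U ** U"
    by (simp only: Mx_def matrix_mul_assoc)
  then have "Mx (U ** A ** adj U) = A" by (simp only: UU1' UU1 matrix_mul_lid)
  then show ?thesis by (simp add: melem_Mx)
qed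

definition Lent :: "'d \<Rightarrow> 'd \<Rightarrow> complex" where
  "Lent k l = (if 0 < p k + p l then complex_of_real (2 * (p k - p l) / (p k + p l)) * (\<i> * melem U H k l) else 0)"

definition L0 where "L0 = U ** (\<chi> k l. Lent k l) ** adj U"

lemma melem_L0: "melem U L0 k l = Lent k l"
  by (simp add: L0_def melem_conj)

lemma s0: "\<not> 0 < p k + p l \<Longrightarrow> p k = 0 \<and> p l = 0"
  using pnn[of k] pnn[of l] by linarith

lemma cnj_aux: "complex_of_real (- c) * (\<i> * cnj h) = cnj (complex_of_real c * (\<i> * h))"
  by simp

lemma L0_X: "L0 \<in> Xspace U p"
proof (rule Xspace_I)
  fix k l
  show "melem U L0 l k = cnj (melem U L0 k l)"
  proof (cases "0 < p k + p l")
    case True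
    have e: "2 * (p l - p k) / (p k + p l) = - (2 * (p k - p l) / (p k + p l))"
      by (simp only: add.commute[of "p l"] minus_divide_left) simp
    show ?thesis unfolding melem_L0 Lent_def
      by (simp only: H_herm[of l k] e add.commute[of "p l" "p k"] True if_True cnj_aux)
  next
    case False
    then show ?thesis by (simp add: melem_L0 Lent_def add.commute)
  qed
  show "p k = 0 \<Longrightarrow> p l = 0 \<Longrightarrow> melem U L0 k l = 0"
    by (simp add: melem_L0 Lent_def)
qed

lemma Rop_L0: "Rop \<rho> L0 = icomm \<rho> H"
proof (rule melem_ext)
  fix k l
  show "melem U (Rop \<rho> L0) k l = melem U (icomm \<rho> H) k l"
  proof (cases "0 < p k + p l")
    case True
    have r: "(p k + p l) / 2 * (2 * (p k - p l) / (p k + p l)) = p k - p l"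
      using True by (simp add: field_simps)
    have "melem U (Rop \<rho> L0) k l = complex_of_real ((p k + p l) / 2 * (2 * (p k - p l) / (p k + p l))) * (\<i> * melem U H k l)"
      using True by (simp add: melem_Rop melem_L0 Lent_def of_real_mult)
    also have "\<dots> = melem U (icomm \<rho> H) k l" by (simp only: r melem_icomm) (simp add: algebra_simps)
    finally show ?thesis .
  next
    case False
    then show ?thesis using s0[OF False] by (simp add: melem_Rop melem_L0 Lent_def melem_icomm)
  qed
qed

lemma SLD_eq: "SLD \<rho> U p H = L0"
  unfolding SLD_def
proof (rule the_equality)
  show "L0 \<in> Xspace U p \<and> Rop \<rho> L0 = icomm \<rho> H" using L0_X Rop_L0 by blast
next
  fix L assume a: "L \<in> Xspace U p \<and> Rop \<rho> L = icomm \<rho> H"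
  show "L = L0"
  proof (rule melem_ext)
    fix k l
    have eq: "complex_of_real ((p k + p l) / 2) * melem U L k l = \<i> * complex_of_real (p k - p l) * melem U H k l"
    proof -
      have "melem U (Rop \<rho> L) k l = melem U (icomm \<rho> H) k l" using a by simp
      then show ?thesis by (simp only: melem_Rop melem_icomm)
    qed
    show "melem U L k l = melem U L0 k l"
    proof (cases "0 < p k + p l")
      case True
      have nz: "complex_of_real (p k) + complex_of_real (p l) \<noteq> 0"
        using True by (metis of_real_add of_real_eq_0_iff less_irrefl)
      have c: "complex_of_real (2 / (p k + p l)) * complex_of_real ((p k + p l) / 2) = 1"
      proof -
        have "2 / (p k + p l) * ((p k + p l) / 2) = 1" using True by simp
        then show ?thesis by (simp only: of_real_mult[symmetric] of_real_1)
      qed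
      have "melem U L k l = complex_of_real (2 / (p k + p l)) * (complex_of_real ((p k + p l) / 2) * melem U L k l)"
        by (simp only: mult.assoc[symmetric] c mult_1)
      also have "\<dots> = complex_of_real (2 / (p k + p l)) * (\<i> * complex_of_real (p k - p l) * melem U H k l)"
        by (simp only: eq)
      also have "\<dots> = Lent k l"
        using True nz by (simp add: Lent_def field_simps)
      finally show ?thesis by (simp add: melem_L0)
    next
      case False
      then show ?thesis using s0[OF False] Xspace_D2[OF conjunct1[OF a], of k l]
        by (simp add: melem_L0 Lent_def)
    qed
  qed
qed

end


lemma cm: "(cmod (complex_of_real c * (\<i> * h)))\<^sup>2 = c\<^sup>2 * (cmod h)\<^sup>2"
  by (simp add: norm_mult power_mult_distrib)

lemma entry_L:
  fixes s a :: real and h :: complex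
  assumes "s > 0"
  shows "s / 2 * (cmod (complex_of_real (2 * a / s) * (\<i> * h)))\<^sup>2 = 2 * (a\<^sup>2 / s * (cmod h)\<^sup>2)"
proof -
  have "(cmod (complex_of_real (2 * a / s) * (\<i> * h)))\<^sup>2 = (2 * a / s)\<^sup>2 * (cmod h)\<^sup>2"
    by (rule cm)
  then show ?thesis using assms by (simp add: field_simps power2_eq_square)
qed

lemma entry_D:
  fixes s a G :: real and h :: complex
  assumes "s > 0" "G = (1 - (1 - s) ^ n) / s"
  shows "s / 2 * (cmod (complex_of_real (2 * a / s) * (\<i> * h) - complex_of_real (2 * G) * (\<i> * complex_of_real a * h)))\<^sup>2
     = 2 * (1 - s) ^ (2 * n) * (a\<^sup>2 / s * (cmod h)\<^sup>2)"
proof -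
  have g: "G * s = 1 - (1 - s) ^ n" using assms by simp
  have "2 * a / s - 2 * G * a = (2 * a - 2 * a * (G * s)) / s"
    using assms(1) by (simp add: field_simps)
  also have "\<dots> = 2 * a * (1 - s) ^ n / s" by (simp only: g) (simp add: algebra_simps)
  finally have r: "2 * a / s - 2 * G * a = 2 * a * (1 - s) ^ n / s" .
  have "complex_of_real (2 * a / s) * (\<i> * h) - complex_of_real (2 * G) * (\<i> * complex_of_real a * h)
      = complex_of_real (2 * a / s - 2 * G * a) * (\<i> * h)"
    by (simp only: of_real_diff of_real_mult) (simp add: algebra_simps)
  also have "\<dots> = complex_of_real (2 * a * (1 - s) ^ n / s) * (\<i> * h)" by (simp only: r)
  finally have e: "(cmod (complex_of_real (2 * a / s) * (\<i> * h) - complex_of_real (2 * G) * (\<i> * complex_of_real a * h)))\<^sup>2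
      = (2 * a * (1 - s) ^ n / s)\<^sup>2 * (cmod h)\<^sup>2"
    by (simp only: cm)
  have p: "(1 - s) ^ (2 * n) = ((1 - s) ^ n)\<^sup>2" by (simp add: power_mult[symmetric] mult.commute)
  show ?thesis unfolding e p using assms by (simp add: field_simps power2_eq_square)
qed

context eig begin

abbreviation gv where "gv \<equiv> (\<lambda>k. (Rop \<rho> ^^ k) (icomm \<rho> H))"

lemma Rop_add: "Rop \<rho> (X + Y) = Rop \<rho> X + Rop \<rho> Y"
  by (rule melem_ext) (simp add: melem_Rop melem_add distrib_left)
lemma Rop_scale: "Rop \<rho> (r *\<^sub>R X) = r *\<^sub>R Rop \<rho> X"
  by (rule melem_ext) (simp add: melem_Rop melem_scaleR mult.left_commute)
lemma Rop_zero: "Rop \<rho> 0 = 0"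
  by (rule melem_ext) (simp add: melem_Rop melem_zero)
lemma Rop_sum: "Rop \<rho> (\<Sum>i\<in>S. f i) = (\<Sum>i\<in>S. Rop \<rho> (f i))"
  by (induction S rule: infinite_finite_induct) (auto simp: Rop_zero Rop_add)

lemma kr_Rop: "Y \<in> kr gv m \<Longrightarrow> Rop \<rho> Y \<in> kr gv (Suc m)"
  unfolding kr_def
proof clarify
  fix c
  have "Rop \<rho> (\<Sum>k<m. c k *\<^sub>R gv k) = (\<Sum>k<m. c k *\<^sub>R gv (Suc k))"
    by (simp add: Rop_sum Rop_scale)
  also have "\<dots> = (\<Sum>k<Suc m. (if k = 0 then 0 else c (k - 1)) *\<^sub>R gv k)"
    by (simp only: sum.lessThan_Suc_shift) simp
  finally have eq: "Rop \<rho> (\<Sum>k<m. c k *\<^sub>R gv k) = (\<Sum>k<Suc m. (if k = 0 then 0 else c (k - 1)) *\<^sub>R gv k)" .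
  show "\<exists>e. Rop \<rho> (\<Sum>k<m. c k *\<^sub>R gv k) = (\<Sum>k<Suc m. e k *\<^sub>R gv k)"
    by (rule exI[of _ "\<lambda>k. if k = 0 then 0 else c (k - 1)"]) (rule eq)
qed

primrec TT :: "nat \<Rightarrow> complex^'d^'d" where
  "TT 0 = icomm \<rho> H"
| "TT (Suc j) = TT j - 2 *\<^sub>R Rop \<rho> (TT j)"

lemma Tpow_kr: "TT j \<in> kr gv (Suc j)"
proof (induction j)
  case 0
  then show ?case using kr_gen[of 0 1 gv] by simp
next
  case (Suc j)
  have a: "TT j \<in> kr gv (Suc (Suc j))"
    using Suc kr_mono[of "Suc j" "Suc (Suc j)" gv] by auto
  have b: "Rop \<rho> (TT j) \<in> kr gv (Suc (Suc j))"
    using kr_Rop[OF Suc] .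
  show ?case using kr_sub[OF a kr_scale[OF b, where r=2]] by (simp only: TT.simps)
qed

lemma melem_Tpow: "melem U (TT j) k l
   = complex_of_real ((1 - (p k + p l)) ^ j) * melem U (icomm \<rho> H) k l"
proof (induction j)
  case 0
  then show ?case by simp
next
  case (Suc j)
  show ?case
    by (simp only: TT.simps melem_sub melem_scaleR melem_Rop Suc) (simp add: algebra_simps)
qed

definition Y0 where "Y0 n = (\<Sum>j<n. 2 *\<^sub>R TT j)"

lemma Y0_kr: "Y0 n \<in> kr gv n"
  unfolding Y0_def
proof (rule kr_sum)
  fix j assume "j \<in> {..<n}"
  then have "kr gv (Suc j) \<subseteq> kr gv n" by (intro kr_mono) simp
  then show "2 *\<^sub>R TT j \<in> kr gv n" using kr_scale[OF Tpow_kr] by blast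
qed

lemma melem_Y0: "melem U (Y0 n) k l =
  complex_of_real (2 * (\<Sum>j<n. (1 - (p k + p l)) ^ j)) * (\<i> * complex_of_real (p k - p l) * melem U H k l)"
  by (simp add: Y0_def melem_sum melem_scaleR melem_Tpow sum_distrib_left sum_distrib_right
      melem_icomm mult.assoc)

definition Fq where "Fq k l = (if 0 < p k + p l then (p k - p l)\<^sup>2 / (p k + p l) * (cmod (melem U H k l))\<^sup>2 else 0)"

lemma QFI_eq: "QFI U p H = 2 * (\<Sum>k\<in>UNIV. \<Sum>l\<in>UNIV. Fq k l)"
proof -
  have "{(k, l). p k + p l > 0} = {x \<in> UNIV. p (fst x) + p (snd x) > 0}" by auto
  then have "(\<Sum>(k,l)\<in>{(k,l). p k + p l > 0}. (p k - p l)^2 / (p k + p l) * (cmod (melem U H k l))^2)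
     = (\<Sum>x\<in>UNIV. Fq (fst x) (snd x))"
    by (simp only: sum.inter_filter[OF finite] Fq_def split_beta)
  also have "\<dots> = (\<Sum>k\<in>UNIV. \<Sum>l\<in>UNIV. Fq k l)"
    by (simp only: UNIV_Times_UNIV[symmetric] sum.cartesian_product' fst_conv snd_conv)
  finally show ?thesis by (simp add: QFI_def)
qed

lemma ipL: "rho_inner \<rho> L0 L0 = QFI U p H"
proof -
  have "rho_inner \<rho> L0 L0 = (\<Sum>k\<in>UNIV. \<Sum>l\<in>UNIV. (p k + p l) / 2 * (cmod (melem U L0 k l))\<^sup>2)"
    by (rule inner_herm[OF Xspace_herm[OF L0_X]])
  also have "\<dots> = (\<Sum>k\<in>UNIV. \<Sum>l\<in>UNIV. 2 * Fq k l)"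
  proof (intro sum.cong refl)
    fix k l
    show "(p k + p l) / 2 * (cmod (melem U L0 k l))\<^sup>2 = 2 * Fq k l"
    proof (cases "0 < p k + p l")
      case True
      have m: "melem U L0 k l = complex_of_real (2 * (p k - p l) / (p k + p l)) * (\<i> * melem U H k l)"
        by (simp only: melem_L0 Lent_def if_P[OF True])
      have f: "Fq k l = (p k - p l)\<^sup>2 / (p k + p l) * (cmod (melem U H k l))\<^sup>2"
        by (simp only: Fq_def if_P[OF True])
      show ?thesis by (simp only: m f entry_L[OF True])
    next
      case False
      then show ?thesis unfolding melem_L0 Lent_def Fq_def by simp
    qed
  qed
  finally show ?thesis by (simp add: QFI_eq sum_distrib_left)
qed

lemma ipD: "rho_inner \<rho> (L0 - Y0 n) (L0 - Y0 n) =
   (\<Sum>k\<in>UNIV. \<Sum>l\<in>UNIV. 2 * (1 - (p k + p l)) ^ (2 * n) * Fq k l)"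
proof -
  have X: "L0 - Y0 n \<in> Xspace U p"
    using Xspace_add[OF L0_X Xspace_scale[OF kr_Xspace[OF Y0_kr], of "-1"]] by simp
  have "rho_inner \<rho> (L0 - Y0 n) (L0 - Y0 n) =
     (\<Sum>k\<in>UNIV. \<Sum>l\<in>UNIV. (p k + p l) / 2 * (cmod (melem U (L0 - Y0 n) k l))\<^sup>2)"
    by (rule inner_herm[OF Xspace_herm[OF X]])
  also have "\<dots> = (\<Sum>k\<in>UNIV. \<Sum>l\<in>UNIV. 2 * (1 - (p k + p l)) ^ (2 * n) * Fq k l)"
  proof (intro sum.cong refl)
    fix k l
    show "(p k + p l) / 2 * (cmod (melem U (L0 - Y0 n) k l))\<^sup>2 = 2 * (1 - (p k + p l)) ^ (2 * n) * Fq k l"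
    proof (cases "0 < p k + p l")
      case True
      have G: "(\<Sum>j<n. (1 - (p k + p l)) ^ j) = (1 - (1 - (p k + p l)) ^ n) / (p k + p l)"
        using True by (simp add: sum_gp_strict)
      have m: "melem U (L0 - Y0 n) k l = complex_of_real (2 * (p k - p l) / (p k + p l)) * (\<i> * melem U H k l)
         - complex_of_real (2 * (\<Sum>j<n. (1 - (p k + p l)) ^ j)) * (\<i> * complex_of_real (p k - p l) * melem U H k l)"
        by (simp only: melem_sub melem_L0 Lent_def if_P[OF True] melem_Y0)
      have f: "Fq k l = (p k - p l)\<^sup>2 / (p k + p l) * (cmod (melem U H k l))\<^sup>2"
        by (simp only: Fq_def if_P[OF True])
      show ?thesis by (simp only: m f entry_D[OF True G])
    next
      case False
      then show ?thesis using s0[OF False] unfolding melem_sub melem_L0 Lent_def melem_Y0 Fq_def by simp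
    qed
  qed
  finally show ?thesis .
qed

end


lemma sum_pairs: "(\<Sum>r\<in>(UNIV::('a::finite \<times> 'b::finite) set). f r) = (\<Sum>a\<in>UNIV. \<Sum>b\<in>UNIV. f (a, b))"
  by (simp only: UNIV_Times_UNIV[symmetric] sum.cartesian_product')

lemma tensor_entry: "tensor A B $ r $ c = A $ fst r $ fst c * B $ snd r $ snd c"
  by (simp add: tensor_def)

lemma tensor_mult: "tensor (A::'d::finite cmat) B ** tensor C D = tensor (A ** C) (B ** D)"
proof -
  have "(tensor A B ** tensor C D) $ r $ c = tensor (A ** C) (B ** D) $ r $ c" for r c
  proof -
    have "(tensor A B ** tensor C D) $ r $ c
       = (\<Sum>a\<in>UNIV. \<Sum>b\<in>UNIV. (A $ fst r $ a * C $ a $ fst c) * (B $ snd r $ b * D $ b $ snd c))"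
      by (simp add: mm_entry tensor_entry sum_pairs mult_ac)
    also have "\<dots> = (\<Sum>a\<in>UNIV. A $ fst r $ a * C $ a $ fst c) * (\<Sum>b\<in>UNIV. B $ snd r $ b * D $ b $ snd c)"
      by (simp add: sum_product)
    also have "\<dots> = tensor (A ** C) (B ** D) $ r $ c" by (simp add: tensor_entry mm_entry)
    finally show ?thesis .
  qed
  then show ?thesis by (simp add: vec_eq_iff)
qed

lemma tensor_one: "tensor (mat 1 :: 'd::finite cmat) (mat 1) = mat 1"
  by (auto simp: vec_eq_iff tensor_def mat_def prod_eq_iff)

lemma swap_right: "(X ** (swap_op :: complex^('d::finite\<times>'d)^('d\<times>'d))) $ r $ c = X $ r $ (snd c, fst c)"
proof -
  have "(X ** swap_op) $ r $ c = (\<Sum>x\<in>UNIV. X $ r $ x * (if x = (snd c, fst c) then 1 else 0))"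
    unfolding mm_entry swap_op_def by (intro sum.cong refl) (auto simp: prod_eq_iff)
  then show ?thesis by (simp add: if_distrib if_distribR sum.delta' cong: if_cong)
qed

lemma swap_left: "((swap_op :: complex^('d::finite\<times>'d)^('d\<times>'d)) ** X) $ r $ c = X $ (snd r, fst r) $ c"
proof -
  have "(swap_op ** X) $ r $ c = (\<Sum>x\<in>UNIV. (if x = (snd r, fst r) then 1 else 0) * X $ x $ c)"
    unfolding mm_entry swap_op_def by (intro sum.cong refl) (auto simp: prod_eq_iff)
  then show ?thesis by (simp add: if_distrib if_distribR sum.delta cong: if_cong)
qed

lemma swap_comm: "tensor (A::'d::finite cmat) B ** swap_op = swap_op ** tensor B A"
  by (simp add: vec_eq_iff swap_right swap_left tensor_entry mult.commute)

definition dg :: "('n::finite \<Rightarrow> complex) \<Rightarrow> complex^'n^'n" where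
  "dg f = (\<chi> i j. if i = j then f i else 0)"

lemma dg_mult: "dg f ** dg g = dg (\<lambda>i. f i * g i)"
proof -
  have "(dg f ** dg g) $ i $ j = dg (\<lambda>i. f i * g i) $ i $ j" for i j
  proof -
    have "(dg f ** dg g) $ i $ j = (\<Sum>k\<in>UNIV. if k = i then f i * (if i = j then g i else 0) else 0)"
      unfolding mm_entry dg_def by (intro sum.cong refl) auto
    also have "\<dots> = f i * (if i = j then g i else 0)" by (rule trans[OF sum.delta]) simp_all
    finally show ?thesis by (simp add: dg_def)
  qed
  then show ?thesis by (simp add: vec_eq_iff)
qed
lemma dg_sub: "dg f - dg g = dg (\<lambda>i. f i - g i)"
  by (simp add: vec_eq_iff dg_def)
lemma dg_one: "mat 1 = dg (\<lambda>i. 1)"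
  by (simp add: vec_eq_iff dg_def mat_def)
lemma dg_zero: "0 = dg (\<lambda>i. 0)"
  by (simp add: vec_eq_iff dg_def)
lemma dg_add: "dg f + dg g = dg (\<lambda>i. f i + g i)"
  by (simp add: vec_eq_iff dg_def)
lemma dg_sum: "(\<Sum>l\<in>S. dg (f l)) = dg (\<lambda>i. \<Sum>l\<in>S. f l i)"
proof (induction S rule: infinite_finite_induct)
  case (infinite A) then show ?case by (simp only: sum.infinite[OF infinite.hyps] dg_zero)
next
  case empty then show ?case by (simp only: sum.empty dg_zero)
next
  case (insert x F) then show ?case by (simp only: sum.insert[OF insert.hyps(1) insert.hyps(2)] insert.IH dg_add)
qed
lemma mpow_Suc: "mpow M (Suc l) = M ** mpow M l"
  by (simp add: mpow_def)
lemma mpow_0: "mpow M 0 = mat 1"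
  by (simp add: mpow_def)
lemma mpow_dg: "mpow (dg f) l = dg (\<lambda>i. f i ^ l)"
proof (induction l)
  case 0 then show ?case by (simp only: mpow_0 dg_one power_0)
next
  case (Suc l) then show ?case by (simp only: mpow_Suc dg_mult power_Suc)
qed
lemma trace_dg: "trace (dg g ** X) = (\<Sum>r\<in>UNIV. g r * X $ r $ r)"
  unfolding trace_def
proof (intro sum.cong refl)
  fix r
  have "(dg g ** X) $ r $ r = (\<Sum>k\<in>UNIV. if k = r then g r * X $ r $ r else 0)"
    unfolding mm_entry dg_def by (intro sum.cong refl) auto
  also have "\<dots> = g r * X $ r $ r" by (rule trans[OF sum.delta]) simp_all
  finally show "(dg g ** X) $ r $ r = g r * X $ r $ r" .
qed

lemma tensor_diag1: "tensor (diagm p) (mat 1 :: 'd::finite cmat) = dg (\<lambda>r. complex_of_real (p (fst r)))"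
  by (auto simp: vec_eq_iff tensor_def diagm_def mat_def dg_def prod_eq_iff)
lemma tensor_diag2: "tensor (mat 1 :: 'd::finite cmat) (diagm p) = dg (\<lambda>r. complex_of_real (p (snd r)))"
  by (auto simp: vec_eq_iff tensor_def diagm_def mat_def dg_def prod_eq_iff)

locale conjW =
  fixes W Wi :: "complex^'n::finite^'n"
  assumes WW1: "Wi ** W = mat 1" and WW2: "W ** Wi = mat 1"
begin
definition cW where "cW X = W ** X ** Wi"
lemma WW1': "A ** Wi ** W = A"
  by (metis WW1 matrix_mul_assoc matrix_mul_rid)
lemma cW_mult: "cW X ** cW Y = cW (X ** Y)"
  by (simp only: cW_def matrix_mul_assoc WW1')
lemma cW_sub: "cW X - cW Y = cW (X - Y)"
  by (simp add: cW_def mm_sub_left mm_sub_right)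
lemma cW_one: "cW (mat 1) = mat 1"
  by (simp add: cW_def WW2)
lemma cW_mpow: "mpow (cW X) l = cW (mpow X l)"
proof (induction l)
  case 0 then show ?case by (simp only: mpow_0 cW_one)
next
  case (Suc l)
  have "mpow (cW X) (Suc l) = cW X ** mpow (cW X) l" by (rule mpow_Suc)
  also have "\<dots> = cW (X ** mpow X l)" by (simp only: Suc cW_mult)
  also have "cW (X ** mpow X l) = cW (mpow X (Suc l))" by (simp only: mpow_Suc)
  finally show ?case .
qed
lemma cW_sum: "(\<Sum>l\<in>S. cW (f l)) = cW (\<Sum>l\<in>S. f l)"
  by (simp add: cW_def mm_sum_left mm_sum_right)
end



context eig begin

lemma W1: "tensor (adj U) (adj U) ** tensor U U = mat 1"
  by (simp only: tensor_mult UU1 tensor_one)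
lemma W2: "tensor U U ** tensor (adj U) (adj U) = mat 1"
  by (simp only: tensor_mult UU2 tensor_one)

end

sublocale eig \<subseteq> cw: conjW "tensor U U" "tensor (adj U) (adj U)"
  by unfold_locales (rule W1, rule W2)

context eig begin

abbreviation "Pf \<equiv> (\<lambda>r::'d\<times>'d. complex_of_real (p (fst r)))"
abbreviation "Qf \<equiv> (\<lambda>r::'d\<times>'d. complex_of_real (p (snd r)))"

lemma rho1: "tensor \<rho> (mat 1) = cw.cW (dg Pf)"
proof -
  have "cw.cW (tensor (diagm p) (mat 1)) = tensor \<rho> (mat 1)"
    by (simp only: cw.cW_def tensor_mult rho_eq matrix_mul_rid UU2)
  then show ?thesis by (simp only: tensor_diag1)
qed

lemma rho2: "tensor (mat 1) \<rho> = cw.cW (dg Qf)"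
proof -
  have "cw.cW (tensor (mat 1) (diagm p)) = tensor (mat 1) \<rho>"
    by (simp only: cw.cW_def tensor_mult rho_eq matrix_mul_rid UU2)
  then show ?thesis by (simp only: tensor_diag2)
qed

lemma one1: "tensor (mat 1) (mat 1 :: 'd cmat) = cw.cW (dg (\<lambda>r. 1))"
  by (simp only: tensor_one dg_one[symmetric] cw.cW_one)

definition Hp where "Hp = adj U ** H ** U"

lemma key1: "X ** tensor (adj U) (adj U) ** swap_op = X ** swap_op ** tensor (adj U) (adj U)"
  by (simp only: matrix_mul_assoc[symmetric] swap_comm)

lemma key2: "X ** tensor (adj U) (adj U) ** tensor H H ** tensor U U = X ** tensor Hp Hp"
  by (simp only: matrix_mul_assoc[symmetric] tensor_mult Hp_def)

lemma trace_conj: "trace (cw.cW G ** swap_op ** tensor H H) = trace (G ** swap_op ** tensor Hp Hp)"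
proof -
  have "trace (cw.cW G ** swap_op ** tensor H H)
      = trace (tensor U U ** (G ** tensor (adj U) (adj U) ** swap_op ** tensor H H))"
    by (simp only: cw.cW_def matrix_mul_assoc)
  also have "\<dots> = trace (G ** tensor (adj U) (adj U) ** swap_op ** tensor H H ** tensor U U)"
    by (rule trace_mul_sym)
  also have "\<dots> = trace (G ** swap_op ** tensor (adj U) (adj U) ** tensor H H ** tensor U U)"
    by (simp only: key1)
  also have "\<dots> = trace (G ** swap_op ** tensor Hp Hp)"
    by (simp only: key2)
  finally show ?thesis .
qed

lemma taylor_eq: "taylor_bound \<rho> H m = complex_of_real (2 * (\<Sum>k\<in>UNIV. \<Sum>l\<in>UNIV.
    (p k - p l)\<^sup>2 * (\<Sum>j\<in>{0..m}. (1 - (p k + p l)) ^ j) * (cmod (melem U H k l))\<^sup>2))"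
proof -
  define g where "g = (\<lambda>r::'d\<times>'d. \<Sum>j\<in>{0..m}. (Pf r - Qf r)\<^sup>2 * (1 - Pf r - Qf r) ^ j)"
  have A1: "tensor \<rho> (mat 1) - tensor (mat 1) \<rho> = cw.cW (dg (\<lambda>r. Pf r - Qf r))"
    by (simp only: rho1 rho2 cw.cW_sub dg_sub)
  have A2: "tensor (mat 1) (mat 1) - tensor \<rho> (mat 1) - tensor (mat 1) \<rho> = cw.cW (dg (\<lambda>r. 1 - Pf r - Qf r))"
    by (simp only: rho1 rho2 one1 cw.cW_sub dg_sub)
  have S: "(\<Sum>j\<in>{0..m}. mpow (tensor \<rho> (mat 1) - tensor (mat 1) \<rho>) 2
        ** mpow (tensor (mat 1) (mat 1) - tensor \<rho> (mat 1) - tensor (mat 1) \<rho>) j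
        ** swap_op ** tensor H H) = cw.cW (dg g) ** swap_op ** tensor H H"
    by (simp only: A1 A2 cw.cW_mpow mpow_dg cw.cW_mult dg_mult mm_sum_left[symmetric] cw.cW_sum dg_sum g_def)
  have "taylor_bound \<rho> H m = 2 * trace (dg g ** swap_op ** tensor Hp Hp)"
    unfolding taylor_bound_def S by (simp only: trace_conj)
  also have "\<dots> = 2 * (\<Sum>r\<in>UNIV. g r * (Hp $ snd r $ fst r * Hp $ fst r $ snd r))"
    by (simp only: matrix_mul_assoc[symmetric] trace_dg swap_left tensor_entry fst_conv snd_conv)
  also have "\<dots> = 2 * (\<Sum>k\<in>UNIV. \<Sum>l\<in>UNIV. g (k, l) * (Hp $ l $ k * Hp $ k $ l))"
    by (simp only: sum_pairs fst_conv snd_conv)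
  also have "\<dots> = complex_of_real (2 * (\<Sum>k\<in>UNIV. \<Sum>l\<in>UNIV.
    (p k - p l)\<^sup>2 * (\<Sum>j\<in>{0..m}. (1 - (p k + p l)) ^ j) * (cmod (melem U H k l))\<^sup>2))"
  proof -
    have e: "g (k, l) * (Hp $ l $ k * Hp $ k $ l) = complex_of_real ((p k - p l)\<^sup>2 * (\<Sum>j\<in>{0..m}. (1 - (p k + p l)) ^ j) * (cmod (melem U H k l))\<^sup>2)" for k l
    proof -
      have h: "Hp $ l $ k * Hp $ k $ l = complex_of_real ((cmod (melem U H k l))\<^sup>2)"
        unfolding complex_norm_square using H_herm[of l k] by (simp add: melem_def Hp_def mult.commute)
      show ?thesis unfolding h g_def by (simp add: sum_distrib_left sum_distrib_right algebra_simps)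
    qed
    show ?thesis by (simp only: e of_real_sum[symmetric]) simp
  qed
  finally show ?thesis .
qed

end


lemma p_nonneg:
  assumes u: "unitary U" and r: "\<rho> = U ** diagm p ** adj U" and ps: "psd \<rho>"
  shows "p k \<ge> 0"
proof -
  have U1: "adj U ** U = mat 1" using u by (simp add: unitary_def)
  have U1': "A ** adj U ** U = A" for A :: "complex^'a^'a"
    by (metis U1 matrix_mul_assoc matrix_mul_rid)
  have "adj U ** \<rho> ** U = adj U ** U ** diagm p ** adj U ** U"
    by (simp only: r matrix_mul_assoc)
  then have d: "adj U ** \<rho> ** U = diagm p" by (simp only: U1' U1 matrix_mul_lid)
  have "(adj U ** \<rho> ** U) $ k $ k = (\<Sum>j\<in>UNIV. (\<Sum>i\<in>UNIV. cnj (U $ i $ k) * \<rho> $ i $ j) * U $ j $ k)"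
    by (simp add: mm_entry adj_entry)
  also have "\<dots> = (\<Sum>i\<in>UNIV. \<Sum>j\<in>UNIV. cnj ((\<chi> i. U $ i $ k) $ i) * \<rho> $ i $ j * (\<chi> i. U $ i $ k) $ j)"
    by (simp add: sum_distrib_right) (rule sum.swap)
  finally have e: "complex_of_real (p k) = (\<Sum>i\<in>UNIV. \<Sum>j\<in>UNIV. cnj ((\<chi> i. U $ i $ k) $ i) * \<rho> $ i $ j * (\<chi> i. U $ i $ k) $ j)"
    using d by (simp add: diagm_def)
  have "0 \<le> Re (\<Sum>i\<in>UNIV. \<Sum>j\<in>UNIV. cnj ((\<chi> i. U $ i $ k) $ i) * \<rho> $ i $ j * (\<chi> i. U $ i $ k) $ j)"
    using ps unfolding psd_def by blast
  then show ?thesis unfolding e[symmetric] by simp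
qed

lemma tay_entry:
  fixes s a c :: real
  assumes "s > 0"
  shows "a\<^sup>2 * (\<Sum>j<N. (1 - s) ^ j) * c = a\<^sup>2 / s * c - (1 - s) ^ N * (a\<^sup>2 / s * c)"
proof -
  have g: "(\<Sum>j<N. (1 - s) ^ j) = (1 - (1 - s) ^ N) / s"
    using assms by (simp add: sum_gp_strict)
  have "a\<^sup>2 * G * c = a\<^sup>2 / s * c - (1 - s) ^ N * (a\<^sup>2 / s * c)" if "G = (1 - (1 - s) ^ N) / s" for G
    unfolding that using assms by (simp add: field_simps)
  from this[OF g] show ?thesis .
qed

theorem theorem2:
  fixes \<rho> H U :: "complex^'d::finite^'d" and p :: "'d \<Rightarrow> real"
  assumes "density_matrix \<rho>"
    and "hermitian H"
    and "spectral_decomp \<rho> U p"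
    and "QFI U p H > 0"
  shows "\<forall>n::nat. n \<ge> 1 \<longrightarrow>
     \<bar>krylov_bound \<rho> U p H n - QFI U p H\<bar> / QFI U p H
       \<le> cmod (taylor_bound \<rho> H (2*n - 1) - complex_of_real (QFI U p H)) / QFI U p H"
proof (intro allI impI)
  fix n :: nat assume n1: "n \<ge> 1"
  have u: "unitary U" and r: "\<rho> = U ** diagm p ** adj U"
    using assms(3) by (auto simp: spectral_decomp_def)
  have ps: "psd \<rho>" using assms(1) by (simp add: density_matrix_def)
  interpret eig \<rho> U H p
    using u r p_nonneg[OF u r ps] assms(2) by unfold_locales auto
  define K where "K = kr gv n"
  have KK: "Krylov \<rho> H n = K" by (simp add: K_def Krylov_kr)
  have def: "\<And>Y. Y \<in> kr gv n \<Longrightarrow> rho_inner \<rho> Y Y = 0 \<Longrightarrow> Y = 0"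
    using kr_Xspace inner_def0 by blast
  define Ln where "Ln = proj \<rho> K L0"
  have Ln: "Ln \<in> K" "\<forall>Z\<in>K. rho_inner \<rho> (L0 - Ln) Z = 0"
    using proj_char[OF def, where A=L0] unfolding Ln_def proj_def K_def by auto
  have kb: "krylov_bound \<rho> U p H n = rho_inner \<rho> Ln Ln"
    by (simp add: krylov_bound_def SLD_eq KK Ln_def Let_def)
  have o1: "rho_inner \<rho> (L0 - Ln) Ln = 0" using Ln by blast
  have o2: "rho_inner \<rho> (L0 - Ln) (Y0 n) = 0" using Ln Y0_kr K_def by blast
  note py = pyth[OF o1 o2]
  have LnX: "Ln \<in> Xspace U p" using Ln(1) kr_Xspace K_def by blast
  have Y0X: "Y0 n \<in> Xspace U p" using Y0_kr kr_Xspace by blast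
  have subX: "A \<in> Xspace U p \<Longrightarrow> B \<in> Xspace U p \<Longrightarrow> A - B \<in> Xspace U p" for A B
    using Xspace_add[of A "(-1) *\<^sub>R B"] Xspace_scale[of B "-1"] by simp
  have n1': "0 \<le> rho_inner \<rho> (L0 - Ln) (L0 - Ln)"
    by (rule inner_nonneg[OF Xspace_herm[OF subX[OF L0_X LnX]]])
  have n2': "0 \<le> rho_inner \<rho> (Ln - Y0 n) (Ln - Y0 n)"
    by (rule inner_nonneg[OF Xspace_herm[OF subX[OF LnX Y0X]]])
  define E where "E = (\<Sum>k\<in>UNIV. \<Sum>l\<in>UNIV. 2 * (1 - (p k + p l)) ^ (2 * n) * Fq k l)"
  have kry: "\<bar>krylov_bound \<rho> U p H n - QFI U p H\<bar> \<le> E"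
  proof -
    have "\<bar>krylov_bound \<rho> U p H n - QFI U p H\<bar> = rho_inner \<rho> (L0 - Ln) (L0 - Ln)"
      using py(1) ipL kb n1' by simp
    also have "\<dots> \<le> rho_inner \<rho> (L0 - Y0 n) (L0 - Y0 n)" using py(2) n2' by simp
    also have "\<dots> = E" by (simp add: ipD E_def)
    finally show ?thesis .
  qed
  have Enn: "0 \<le> E" using py(2) n1' n2' ipD E_def by simp
  have set: "{0..2 * n - 1} = {..<2 * n}" using n1 by auto
  have tay: "taylor_bound \<rho> H (2 * n - 1) = complex_of_real (QFI U p H - E)"
  proof -
    have "(\<Sum>k\<in>UNIV. \<Sum>l\<in>UNIV. (p k - p l)\<^sup>2 * (\<Sum>j\<in>{0..2 * n - 1}. (1 - (p k + p l)) ^ j) * (cmod (melem U H k l))\<^sup>2)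
       = (\<Sum>k\<in>UNIV. \<Sum>l\<in>UNIV. Fq k l - (1 - (p k + p l)) ^ (2 * n) * Fq k l)"
    proof (intro sum.cong refl)
      fix k l
      show "(p k - p l)\<^sup>2 * (\<Sum>j\<in>{0..2 * n - 1}. (1 - (p k + p l)) ^ j) * (cmod (melem U H k l))\<^sup>2
         = Fq k l - (1 - (p k + p l)) ^ (2 * n) * Fq k l"
      proof (cases "0 < p k + p l")
        case True
        show ?thesis unfolding set Fq_def if_P[OF True] by (rule tay_entry[OF True])
      next
        case False
        then show ?thesis using s0[OF False] by (simp add: Fq_def)
      qed
    qed
    note eqA = this
    have R: "2 * (\<Sum>k\<in>UNIV. \<Sum>l\<in>UNIV. (p k - p l)\<^sup>2 * (\<Sum>j\<in>{0..2 * n - 1}. (1 - (p k + p l)) ^ j) * (cmod (melem U H k l))\<^sup>2)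
       = QFI U p H - E"
    proof -
      have e1: "(\<Sum>k\<in>UNIV. \<Sum>l\<in>UNIV. Fq k l - (1 - (p k + p l)) ^ (2 * n) * Fq k l)
        = (\<Sum>k\<in>UNIV. \<Sum>l\<in>UNIV. Fq k l) - (\<Sum>k\<in>UNIV. \<Sum>l\<in>UNIV. (1 - (p k + p l)) ^ (2 * n) * Fq k l)"
        by (simp only: sum_subtractf)
      have e2: "E = 2 * (\<Sum>k\<in>UNIV. \<Sum>l\<in>UNIV. (1 - (p k + p l)) ^ (2 * n) * Fq k l)"
        unfolding E_def by (simp only: sum_distrib_left mult.assoc)
      show ?thesis using e1 e2 eqA QFI_eq by linarith
    qed
    show ?thesis by (simp only: taylor_eq R)
  qed
  have "cmod (taylor_bound \<rho> H (2*n - 1) - complex_of_real (QFI U p H)) = E"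
    using Enn unfolding tay by (simp flip: of_real_diff)
  then show "\<bar>krylov_bound \<rho> U p H n - QFI U p H\<bar> / QFI U p H
       \<le> cmod (taylor_bound \<rho> H (2*n - 1) - complex_of_real (QFI U p H)) / QFI U p H"
    using kry assms(4) by (simp add: divide_right_mono)
qed



end
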